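(* In the setting of the multi-dimensional system $\frac{d\boldsymbol{x}}{dt}=\mathbf{A}\boldsymbol{x}+\mathbf{B}_p\boldsymbol{p}+\mathbf{B}_d\boldsymbol{d}$ on $\mathcal{T}=[0,t_f]$ (with $\mathbf{A}$ having non-positive diagonal and non-negative off-diagonal entries, $\mathbf{B}_p\ge0$ entrywise, given $\boldsymbol{d}$ and $\boldsymbol{x}_0$, power bounds $\boldsymbol{0}\le\boldsymbol{p}_{\min}\le\boldsymbol{p}_{\max}$, state bounds $\boldsymbol{x}_{\min}\le\boldsymbol{x}_{\max}$), let $\boldsymbol{\alpha}(t),\boldsymbol{\beta}(t)$ and $\boldsymbol{b}_\pm(t)$ be defined as follows: $\alpha_{i,j}(t)=\max_{0\le\tau\le t}(e^{\mathbf{A}(t-\tau)}\mathbf{B}_p)_{i,j}$, $\beta_{i,j}(t)=\min_{0\le\tau\le t}(e^{\mathbf{A}(t-\tau)}\mathbf{B}_p)_{i,j}$, and $\boldsymbol{b}_\pm(t)=\int_0^t e^{\mathbf{A}(t-\tau)}\mathbf{B}_p\boldsymbol{p}_\pm(\tau)\,d\tau$, where $\boldsymbol{p}_\pm$ are feasible power trajectories (satisfying the power bounds and, with the same $\boldsymbol{x}_0,\boldsymbol{d}$, the state bounds for all $t$). For each $t\in\mathcal{T}$ let $\big(\mathbf{E}^{\mathrm{TI,d}}_{\mathrm{up}}(t),\mathbf{E}^{\mathrm{TI,d}}_{\mathrm{down}}(t)\big)\in\mathbb{R}^{N_p}\times\mathbb{R}^{N_p}$ be an optimal solution (assumed to exist)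 of $$\max_{\mathbf{E}_+,\mathbf{E}_-}\ \sum_{i=1}^{N_p}\ln(\mathrm{E}_{+,i}-\mathrm{E}_{-,i})\quad\text{s.t.}\quad \boldsymbol{\alpha}(t)\mathbf{E}_+\le\boldsymbol{b}_+(t),\ \ \boldsymbol{\beta}(t)\mathbf{E}_-\ge\boldsymbol{b}_-(t),\ \ \mathbf{E}_+\ge\mathbf{E}_-.$$ If a power trajectory $\boldsymbol{p}_a$ satisfies $\boldsymbol{p}_{\min}\le\boldsymbol{p}_a(t)\le\boldsymbol{p}_{\max}$ and, for every input index $i$ and all $t\in\mathcal{T}$, $$\mathrm{E}^{\mathrm{TI,d}}_{\mathrm{down},i}(t)\le\int_0^t p_{a,i}(\tau)\,d\tau\le\mathrm{E}^{\mathrm{TI,d}}_{\mathrm{up},i}(t),$$ then the resulting state $\boldsymbol{x}_a$ (same $\boldsymbol{x}_0$, $\boldsymbol{d}$) satisfies $\boldsymbol{x}_{\min}\le\boldsymbol{x}_a(t)\le\boldsymbol{x}_{\max}$ for all $t\in\mathcal{T}$.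
   Context: Vector inequalities and integrals are componentwise. The optimization problem describes the largest (in volume) axis-aligned box inscribed in the polytope $\{\mathbf{E}:\boldsymbol{\alpha}(t)\mathbf{E}\le\boldsymbol{b}_+(t),\ \boldsymbol{\beta}(t)\mathbf{E}\ge\boldsymbol{b}_-(t)\}$. States are given by $\boldsymbol{x}(t)=e^{\mathbf{A}t}\boldsymbol{x}_0+\int_0^t e^{\mathbf{A}(t-\tau)}(\mathbf{B}_d\boldsymbol{d}(\tau)+\mathbf{B}_p\boldsymbol{p}(\tau))\,d\tau$. *)

theory Defs
  imports "HOL-Analysis.Analysis"
begin

fun mat_pow :: "real^'n^'n \<Rightarrow> nat \<Rightarrow> real^'n^'n" where
  "mat_pow M 0 = mat 1"
| "mat_pow M (Suc k) = M ** mat_pow M k"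

definition mat_exp :: "real^'n^'n \<Rightarrow> real^'n^'n" where
  "mat_exp M = (\<Sum>k. (1 / fact k) *\<^sub>R mat_pow M k)"

definition state ::
  "real^'n^'n \<Rightarrow> real^'m^'n \<Rightarrow> real^'k^'n \<Rightarrow> real^'n \<Rightarrow> (real \<Rightarrow> real^'k)
   \<Rightarrow> (real \<Rightarrow> real^'m) \<Rightarrow> real \<Rightarrow> real^'n" where
  "state A Bp Bd x0 d p t =
     mat_exp (t *\<^sub>R A) *v x0
     + integral {0..t} (\<lambda>\<tau>. mat_exp ((t - \<tau>) *\<^sub>R A) *v (Bd *v d \<tau> + Bp *v p \<tau>))"

definition feasible_power ::
  "real^'n^'n \<Rightarrow> real^'m^'n \<Rightarrow> real^'k^'n \<Rightarrow> real^'n \<Rightarrow> (real \<Rightarrow> real^'k)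
   \<Rightarrow> real \<Rightarrow> real^'m \<Rightarrow> real^'m \<Rightarrow> real^'n \<Rightarrow> real^'n \<Rightarrow> (real \<Rightarrow> real^'m) \<Rightarrow> bool" where
  "feasible_power A Bp Bd x0 d tf pmin pmax xmin xmax p \<longleftrightarrow>
     (\<forall>t\<in>{0..tf}. pmin \<le> p t \<and> p t \<le> pmax
        \<and> xmin \<le> state A Bp Bd x0 d p t \<and> state A Bp Bd x0 d p t \<le> xmax)"

definition alpha_coef :: "real^'n^'n \<Rightarrow> real^'m^'n \<Rightarrow> real \<Rightarrow> real^'m^'n" where
  "alpha_coef A Bp t = (\<chi> i j. (SUP \<tau>\<in>{0..t}. (mat_exp ((t - \<tau>) *\<^sub>R A) ** Bp) $ i $ j))"

definition beta_coef :: "real^'n^'n \<Rightarrow> real^'m^'n \<Rightarrow> real \<Rightarrow> real^'m^'n" where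
  "beta_coef A Bp t = (\<chi> i j. (INF \<tau>\<in>{0..t}. (mat_exp ((t - \<tau>) *\<^sub>R A) ** Bp) $ i $ j))"

definition b_coef :: "real^'n^'n \<Rightarrow> real^'m^'n \<Rightarrow> (real \<Rightarrow> real^'m) \<Rightarrow> real \<Rightarrow> real^'n" where
  "b_coef A Bp p t = integral {0..t} (\<lambda>\<tau>. (mat_exp ((t - \<tau>) *\<^sub>R A) ** Bp) *v p \<tau>)"

definition box_objective :: "real^'m \<Rightarrow> real^'m \<Rightarrow> ereal" where
  "box_objective Ep Em =
     (if (\<forall>i. Em $ i < Ep $ i) then ereal (\<Sum>i\<in>UNIV. ln (Ep $ i - Em $ i)) else -\<infinity>)"

definition box_feasible ::
  "real^'m^'n \<Rightarrow> real^'m^'n \<Rightarrow> real^'n \<Rightarrow> real^'n \<Rightarrow> real^'m \<Rightarrow> real^'m \<Rightarrow> bool" where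
  "box_feasible al be bp bm Ep Em \<longleftrightarrow> al *v Ep \<le> bp \<and> be *v Em \<ge> bm \<and> Ep \<ge> Em"

definition box_optimal ::
  "real^'m^'n \<Rightarrow> real^'m^'n \<Rightarrow> real^'n \<Rightarrow> real^'n \<Rightarrow> real^'m \<Rightarrow> real^'m \<Rightarrow> bool" where
  "box_optimal al be bp bm Ep Em \<longleftrightarrow> box_feasible al be bp bm Ep Em \<and>
     (\<forall>Ep' Em'. box_feasible al be bp bm Ep' Em' \<longrightarrow> box_objective Ep' Em' \<le> box_objective Ep Em)"

end

theory Submission
  imports Defs
begin

lemma mat_pow_scaleR: "mat_pow (r *\<^sub>R X) k = (r^k) *\<^sub>R mat_pow X k"
  by (induction k) (simp_all add: matrix_scalar_ac scalar_matrix_assoc[symmetric])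

lemma mat_pow_entry_bound:
  fixes X :: "real^'n^'n"
  assumes B: "\<And>a b. \<bar>X$a$b\<bar> \<le> B"
  shows "\<bar>mat_pow X k $ i $ j\<bar> \<le> (real CARD('n) * B)^k"
proof (induction k arbitrary: i j)
  case 0
  then show ?case by (simp add: mat_def)
next
  case (Suc k)
  have B0: "0 \<le> B" using B[of i i] by linarith
  have "\<bar>mat_pow X (Suc k) $ i $ j\<bar> = \<bar>\<Sum>l\<in>UNIV. X$i$l * mat_pow X k $ l $ j\<bar>"
    by (simp add: matrix_matrix_mult_def)
  also have "\<dots> \<le> (\<Sum>l\<in>UNIV. \<bar>X$i$l\<bar> * \<bar>mat_pow X k $ l $ j\<bar>)"
    by (rule order_trans[OF sum_abs]) (simp add: abs_mult)
  also have "\<dots> \<le> (\<Sum>l\<in>(UNIV::'n set). B * (real CARD('n) * B)^k)"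
    by (rule sum_mono, rule mult_mono) (use B Suc B0 in auto)
  also have "\<dots> = (real CARD('n) * B)^(Suc k)" by simp
  finally show ?case .
qed

lemma norm_mat_le:
  fixes M :: "real^'n^'n"
  assumes "\<And>a b. \<bar>M$a$b\<bar> \<le> C"
  shows "norm M \<le> real CARD('n) * real CARD('n) * C"
proof -
  have "norm M \<le> (\<Sum>a\<in>UNIV. norm (M$a))"
    unfolding norm_vec_def by (rule L2_set_le_sum) simp
  also have "\<dots> \<le> (\<Sum>a\<in>(UNIV::'n set). real CARD('n) * C)"
  proof (rule sum_mono)
    fix a
    have "norm (M$a) \<le> (\<Sum>b\<in>UNIV. \<bar>M$a$b\<bar>)" by (rule norm_le_l1_cart)
    also have "\<dots> \<le> (\<Sum>b\<in>(UNIV::'n set). C)" by (rule sum_mono) (use assms in auto)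
    finally show "norm (M$a) \<le> real CARD('n) * C" by simp
  qed
  finally show ?thesis by simp
qed

definition mbound :: "real^'n^'n \<Rightarrow> real" where
  "mbound X = (\<Sum>a\<in>UNIV. \<Sum>b\<in>UNIV. \<bar>X$a$b\<bar>)"

lemma mbound: "\<bar>X$a$b\<bar> \<le> mbound X"
proof -
  have "\<bar>X$a$b\<bar> \<le> (\<Sum>b\<in>UNIV. \<bar>X$a$b\<bar>)"
    by (rule member_le_sum) auto
  also have "\<dots> \<le> mbound X" unfolding mbound_def
    by (rule member_le_sum[where f="\<lambda>a. \<Sum>b\<in>UNIV. \<bar>X$a$b\<bar>"]) (auto intro: sum_nonneg)
  finally show ?thesis .
qed

lemma mat_exp_summable:
  fixes X :: "real^'n^'n"
  shows "summable (\<lambda>k. (1 / fact k) *\<^sub>R mat_pow X k)"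
proof -
  let ?B = "real CARD('n) * mbound X"
  let ?C = "real CARD('n) * real CARD('n)"
  have S: "summable (\<lambda>k. ?C * (inverse (fact k) * ?B^k))"
    by (intro summable_mult summable_exp)
  have N: "norm ((1 / fact k) *\<^sub>R mat_pow X k) \<le> ?C * (inverse (fact k) * ?B^k)" for k
  proof -
    have "\<bar>((1 / fact k) *\<^sub>R mat_pow X k) $ a $ b\<bar> \<le> inverse (fact k) * ?B^k" for a b
    proof -
      have "\<bar>((1 / fact k) *\<^sub>R mat_pow X k) $ a $ b\<bar> = inverse (fact k) * \<bar>mat_pow X k $ a $ b\<bar>"
        by (simp add: abs_mult divide_inverse)
      also have "\<dots> \<le> inverse (fact k) * ?B^k"
        by (rule mult_left_mono[OF mat_pow_entry_bound[of X "mbound X" k a b, OF mbound]]) simp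
      finally show ?thesis .
    qed
    from norm_mat_le[OF this] show ?thesis by (simp add: mult.assoc)
  qed
  show ?thesis
    by (rule summable_comparison_test'[OF S N])
qed

lemma mat_exp_entry_sums:
  fixes X :: "real^'n^'n"
  shows "(\<lambda>k. (1 / fact k) * mat_pow X k $ i $ j) sums (mat_exp X $ i $ j)"
proof -
  have bl: "bounded_linear (\<lambda>M::real^'n^'n. M $ i $ j)"
    using bounded_linear_compose[OF bounded_linear_vec_nth bounded_linear_vec_nth] by blast
  have "(\<lambda>k. (1 / fact k) *\<^sub>R mat_pow X k) sums mat_exp X"
    unfolding mat_exp_def by (rule summable_sums[OF mat_exp_summable])
  from bounded_linear.sums[OF bl this] show ?thesis by simp
qed

lemma binom_step:
  fixes P :: "nat \<Rightarrow> 'a::real_vector" and c :: real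
  shows "(\<Sum>m\<le>k. (real (k choose m) * c^(k-m)) *\<^sub>R P (Suc m))
       + c *\<^sub>R (\<Sum>m\<le>k. (real (k choose m) * c^(k-m)) *\<^sub>R P m)
       = (\<Sum>m\<le>Suc k. (real (Suc k choose m) * c^(Suc k-m)) *\<^sub>R P m)"
proof -
  have e1: "(\<Sum>m\<le>k. (real (k choose m) * c^(k-m)) *\<^sub>R P m)
        = (\<Sum>m\<le>Suc k. (real (k choose m) * c^(k-m)) *\<^sub>R P m)"
    by simp
  also have "\<dots> = (real (k choose 0) * c^(k-0)) *\<^sub>R P 0
        + (\<Sum>m\<le>k. (real (k choose Suc m) * c^(k-Suc m)) *\<^sub>R P (Suc m))"
    by (rule sum.atMost_Suc_shift)
  finally have e2: "c *\<^sub>R (\<Sum>m\<le>k. (real (k choose m) * c^(k-m)) *\<^sub>R P m)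
      = (c^Suc k) *\<^sub>R P 0 + (\<Sum>m\<le>k. (real (k choose Suc m) * c^(k-m)) *\<^sub>R P (Suc m))"
  proof -
    assume h: "(\<Sum>m\<le>k. (real (k choose m) * c^(k-m)) *\<^sub>R P m) = (real (k choose 0) * c^(k-0)) *\<^sub>R P 0
        + (\<Sum>m\<le>k. (real (k choose Suc m) * c^(k-Suc m)) *\<^sub>R P (Suc m))"
    have "c *\<^sub>R (\<Sum>m\<le>k. (real (k choose Suc m) * c^(k-Suc m)) *\<^sub>R P (Suc m))
        = (\<Sum>m\<le>k. (real (k choose Suc m) * c^(k-m)) *\<^sub>R P (Suc m))"
      unfolding scaleR_sum_right
    proof (rule sum.cong[OF refl])
      fix m assume "m \<in> {..k}"
      show "c *\<^sub>R (real (k choose Suc m) * c^(k-Suc m)) *\<^sub>R P (Suc m)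
          = (real (k choose Suc m) * c^(k-m)) *\<^sub>R P (Suc m)"
      proof (cases "m < k")
        case True
        then have "k - m = Suc (k - Suc m)" by simp
        then show ?thesis by (simp add: algebra_simps)
      next
        case False
        then show ?thesis by simp
      qed
    qed
    then show ?thesis unfolding h by (simp add: scaleR_add_right)
  qed
  have "(\<Sum>m\<le>Suc k. (real (Suc k choose m) * c^(Suc k-m)) *\<^sub>R P m)
      = (real (Suc k choose 0) * c^(Suc k-0)) *\<^sub>R P 0
        + (\<Sum>m\<le>k. (real (Suc k choose Suc m) * c^(Suc k-Suc m)) *\<^sub>R P (Suc m))"
    by (rule sum.atMost_Suc_shift)
  also have "\<dots> = (c^Suc k) *\<^sub>R P 0
        + (\<Sum>m\<le>k. (real (k choose m) * c^(k-m)) *\<^sub>R P (Suc m))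
        + (\<Sum>m\<le>k. (real (k choose Suc m) * c^(k-m)) *\<^sub>R P (Suc m))"
    by (simp add: sum.distrib[symmetric] algebra_simps scaleR_add_left)
  finally show ?thesis using e2 by (simp add: algebra_simps)
qed

lemma matrix_mul_sum_right:
  fixes X :: "real^'n^'n"
  shows "finite S \<Longrightarrow> X ** (\<Sum>m\<in>S. f m) = (\<Sum>m\<in>S. X ** f m)"
  by (induction S rule: finite_induct) (simp_all add: matrix_add_ldistrib)

lemma mat_shift_mult:
  fixes X Q :: "real^'n^'n"
  shows "(X + c *\<^sub>R mat 1) ** Q = X ** Q + c *\<^sub>R Q"
proof -
  have "(X + c *\<^sub>R mat 1) ** Q = X ** Q + (c *\<^sub>R mat 1) ** Q"
    by (simp add: vec_eq_iff matrix_matrix_mult_def sum.distrib algebra_simps)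
  also have "(c *\<^sub>R mat 1) ** Q = c *\<^sub>R Q"
    by (simp add: scalar_matrix_assoc[symmetric] matrix_mul_lid)
  finally show ?thesis .
qed

lemma mat_pow_shift:
  fixes X :: "real^'n^'n"
  shows "mat_pow (X + c *\<^sub>R mat 1) k = (\<Sum>m\<le>k. (real (k choose m) * c^(k-m)) *\<^sub>R mat_pow X m)"
proof (induction k)
  case 0
  then show ?case by simp
next
  case (Suc k)
  have "mat_pow (X + c *\<^sub>R mat 1) (Suc k)
      = X ** (\<Sum>m\<le>k. (real (k choose m) * c^(k-m)) *\<^sub>R mat_pow X m)
        + c *\<^sub>R (\<Sum>m\<le>k. (real (k choose m) * c^(k-m)) *\<^sub>R mat_pow X m)"
    by (simp add: Suc.IH mat_shift_mult)
  also have "X ** (\<Sum>m\<le>k. (real (k choose m) * c^(k-m)) *\<^sub>R mat_pow X m)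
      = (\<Sum>m\<le>k. (real (k choose m) * c^(k-m)) *\<^sub>R mat_pow X (Suc m))"
    by (simp add: matrix_mul_sum_right matrix_scalar_ac scalar_matrix_assoc)
  finally show ?case using binom_step[of k c "mat_pow X"] by simp
qed

lemma mat_exp_shift_entry:
  fixes X :: "real^'n^'n"
  shows "mat_exp (X + c *\<^sub>R mat 1) $ i $ j = exp c * mat_exp X $ i $ j"
proof -
  define a where "a m = (1 / fact m) * mat_pow X m $ i $ j" for m
  define b where "b l = c^l / fact l" for l :: nat
  have asum: "a sums (mat_exp X $ i $ j)" unfolding a_def by (rule mat_exp_entry_sums)
  have bsum: "b sums exp c" unfolding b_def using exp_converges[of c] by (simp add: divide_inverse mult.commute)
  let ?B = "real CARD('n) * mbound X"
  have na: "summable (\<lambda>m. norm (a m))"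
  proof (rule summable_comparison_test'[where N=0])
    show "summable (\<lambda>m. inverse (fact m) * ?B^m)" by (rule summable_exp)
    fix m :: nat
    have "norm (a m) = inverse (fact m) * \<bar>mat_pow X m $ i $ j\<bar>"
      unfolding a_def by (simp add: abs_mult divide_inverse)
    also have "\<dots> \<le> inverse (fact m) * ?B^m"
      by (rule mult_left_mono[OF mat_pow_entry_bound[of X "mbound X" m i j, OF mbound]]) simp
    finally show "norm (norm (a m)) \<le> inverse (fact m) * ?B^m" by simp
  qed
  have nb: "summable (\<lambda>l. norm (b l))"
  proof -
    have "summable (\<lambda>l. inverse (fact l) * \<bar>c\<bar>^l)" by (rule summable_exp)
    moreover have "norm (b l) = inverse (fact l) * \<bar>c\<bar>^l" for l
      unfolding b_def by (simp add: abs_mult divide_inverse power_abs)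
    ultimately show ?thesis by simp
  qed
  have "(\<Sum>k. a k) * (\<Sum>k. b k) = (\<Sum>k. \<Sum>m\<le>k. a m * b (k - m))"
    by (rule Cauchy_product[OF na nb])
  also have "(\<lambda>k. \<Sum>m\<le>k. a m * b (k - m)) = (\<lambda>k. (1 / fact k) * mat_pow (X + c *\<^sub>R mat 1) k $ i $ j)"
  proof
    fix k
    have "(1 / fact k) * mat_pow (X + c *\<^sub>R mat 1) k $ i $ j
        = (\<Sum>m\<le>k. (1 / fact k) * (real (k choose m) * c^(k-m)) * mat_pow X m $ i $ j)"
      by (simp add: mat_pow_shift sum_component sum_distrib_left mult.assoc)
    also have "\<dots> = (\<Sum>m\<le>k. a m * b (k - m))"
    proof (rule sum.cong[OF refl])
      fix m assume "m \<in> {..k}"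
      then have mk: "m \<le> k" by simp
      show "(1 / fact k) * (real (k choose m) * c^(k-m)) * mat_pow X m $ i $ j = a m * b (k - m)"
        unfolding a_def b_def binomial_fact[OF mk] by (simp add: field_simps)
    qed
    finally show "(\<Sum>m\<le>k. a m * b (k - m)) = (1 / fact k) * mat_pow (X + c *\<^sub>R mat 1) k $ i $ j" ..
  qed
  also have "(\<Sum>k. (1 / fact k) * mat_pow (X + c *\<^sub>R mat 1) k $ i $ j) = mat_exp (X + c *\<^sub>R mat 1) $ i $ j"
    by (rule sums_unique[symmetric, OF mat_exp_entry_sums])
  finally show ?thesis using sums_unique[OF asum] sums_unique[OF bsum] by (simp add: mult.commute)
qed

lemma mat_pow_nonneg:
  fixes N :: "real^'n^'n"
  assumes "\<And>a b. 0 \<le> N $ a $ b"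
  shows "0 \<le> mat_pow N k $ i $ j"
  using assms
  by (induction k arbitrary: i j) (auto simp: mat_def matrix_matrix_mult_def intro!: sum_nonneg)

lemma mat_exp_nonneg_entries:
  fixes N :: "real^'n^'n"
  assumes "\<And>a b. 0 \<le> N $ a $ b"
  shows "0 \<le> mat_exp N $ i $ j"
proof -
  have s: "(\<lambda>k. (1 / fact k) * mat_pow N k $ i $ j) sums (mat_exp N $ i $ j)"
    by (rule mat_exp_entry_sums)
  have "0 \<le> (\<Sum>k. (1 / fact k) * mat_pow N k $ i $ j)"
    by (rule suminf_nonneg[OF sums_summable[OF s]]) (simp add: mat_pow_nonneg[OF assms])
  then show ?thesis using sums_unique[OF s] by simp
qed

lemma metzler_exp_nonneg:
  fixes A :: "real^'n^'n"
  assumes off: "\<forall>i j. i \<noteq> j \<longrightarrow> 0 \<le> A $ i $ j" and s: "0 \<le> s"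
  shows "0 \<le> mat_exp (s *\<^sub>R A) $ i $ j"
proof -
  define c where "c = mbound A"
  define N where "N = s *\<^sub>R (A + c *\<^sub>R mat 1)"
  have N0: "0 \<le> N $ a $ b" for a b
  proof (cases "a = b")
    case True
    have "- A $ a $ a \<le> c" unfolding c_def using mbound[of A a a] by linarith
    then show ?thesis using True s by (simp add: N_def mat_def)
  next
    case False
    then show ?thesis using off s by (simp add: N_def mat_def)
  qed
  have eq: "s *\<^sub>R A = N + (- (s * c)) *\<^sub>R mat 1"
    by (simp add: N_def algebra_simps)
  show ?thesis unfolding eq mat_exp_shift_entry
    using mat_exp_nonneg_entries[OF N0] by simp
qed

lemma mat_exp_powser:
  fixes A :: "real^'n^'n"
  shows "mat_exp (s *\<^sub>R A) $ i $ j = (\<Sum>k. ((1 / fact k) * mat_pow A k $ i $ j) * s^k)"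
    and "summable (\<lambda>k. ((1 / fact k) * mat_pow A k $ i $ j) * s^k)"
proof -
  have "(\<lambda>k. ((1 / fact k) * mat_pow A k $ i $ j) * s^k) = (\<lambda>k. (1 / fact k) * mat_pow (s *\<^sub>R A) k $ i $ j)"
    by (simp add: mat_pow_scaleR mult_ac)
  with mat_exp_entry_sums[of "s *\<^sub>R A" i j]
  have "(\<lambda>k. ((1 / fact k) * mat_pow A k $ i $ j) * s^k) sums mat_exp (s *\<^sub>R A) $ i $ j" by simp
  then show "mat_exp (s *\<^sub>R A) $ i $ j = (\<Sum>k. ((1 / fact k) * mat_pow A k $ i $ j) * s^k)"
    and "summable (\<lambda>k. ((1 / fact k) * mat_pow A k $ i $ j) * s^k)"
    by (auto simp: sums_iff)
qed

lemma mat_exp_continuous: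
  fixes A :: "real^'n^'n"
  shows "continuous_on S (\<lambda>s. mat_exp (s *\<^sub>R A) $ i $ j)"
proof -
  have "isCont (\<lambda>s. \<Sum>k. ((1 / fact k) * mat_pow A k $ i $ j) * s^k) x" for x
    by (rule isCont_powser_converges_everywhere) (rule mat_exp_powser(2))
  then have "isCont (\<lambda>s. mat_exp (s *\<^sub>R A) $ i $ j) x" for x
    by (simp add: mat_exp_powser(1))
  then show ?thesis by (simp add: continuous_at_imp_continuous_on)
qed

lemma prod_integrable:
  fixes f g :: "real \<Rightarrow> real"
  assumes f: "continuous_on {a..b} f" and g: "g integrable_on {a..b}" and g0: "\<And>x. x \<in> {a..b} \<Longrightarrow> 0 \<le> g x"
  shows "(\<lambda>x. f x * g x) integrable_on {a..b}"
proof -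
  have "bounded (f ` {a..b})"
    by (rule compact_imp_bounded[OF compact_continuous_image[OF f compact_Icc]])
  moreover have "f \<in> borel_measurable (lebesgue_on {a..b})"
    by (rule continuous_imp_measurable_on_sets_lebesgue[OF f]) simp
  moreover have "g absolutely_integrable_on {a..b}"
    by (rule nonnegative_absolutely_integrable_1[OF g g0])
  ultimately have "(\<lambda>x. f x * g x) absolutely_integrable_on {a..b}"
    by (intro absolutely_integrable_bounded_measurable_product_real) auto
  then show ?thesis by (rule set_lebesgue_integral_eq_integral(1))
qed

theorem theorem3:
  fixes A :: "real^'n^'n" and Bp :: "real^'m^'n" and Bd :: "real^'k^'n"
    and x0 xmin xmax :: "real^'n" and d :: "real \<Rightarrow> real^'k"
    and pmin pmax :: "real^'m" and tf :: real
    and pplus pminus pa :: "real \<Rightarrow> real^'m"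
    and Eup Edown :: "real \<Rightarrow> real^'m"
  assumes tf: "0 \<le> tf"
    and A_diag: "\<forall>i. A $ i $ i \<le> 0"
    and A_offdiag: "\<forall>i j. i \<noteq> j \<longrightarrow> 0 \<le> A $ i $ j"
    and Bp_nonneg: "\<forall>i j. 0 \<le> Bp $ i $ j"
    and pbounds: "0 \<le> pmin" "pmin \<le> pmax"
    and xbounds: "xmin \<le> xmax"
    and d_int: "d integrable_on {0..tf}"
    and pplus_int: "pplus integrable_on {0..tf}"
    and pminus_int: "pminus integrable_on {0..tf}"
    and pa_int: "pa integrable_on {0..tf}"
    and pplus_feas: "feasible_power A Bp Bd x0 d tf pmin pmax xmin xmax pplus"
    and pminus_feas: "feasible_power A Bp Bd x0 d tf pmin pmax xmin xmax pminus"
    and E_opt: "\<forall>t\<in>{0..tf}. box_optimal (alpha_coef A Bp t) (beta_coef A Bp t)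
                   (b_coef A Bp pplus t) (b_coef A Bp pminus t) (Eup t) (Edown t)"
    and pa_bounds: "\<forall>t\<in>{0..tf}. pmin \<le> pa t \<and> pa t \<le> pmax"
    and pa_energy: "\<forall>i. \<forall>t\<in>{0..tf}.
                      Edown t $ i \<le> integral {0..t} (\<lambda>\<tau>. pa \<tau> $ i)
                    \<and> integral {0..t} (\<lambda>\<tau>. pa \<tau> $ i) \<le> Eup t $ i"
  shows "\<forall>t\<in>{0..tf}. xmin \<le> state A Bp Bd x0 d pa t \<and> state A Bp Bd x0 d pa t \<le> xmax"
proof (intro ballI)
  fix t assume t: "t \<in> {0..tf}"
  then have t0: "0 \<le> t" and ttf: "t \<le> tf" by auto
  define M where "M \<tau> = mat_exp ((t - \<tau>) *\<^sub>R A) ** Bp" for \<tau>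
  define u where "u \<tau> = mat_exp ((t - \<tau>) *\<^sub>R A) *v (Bd *v d \<tau>)" for \<tau>
  have split: "mat_exp ((t - \<tau>) *\<^sub>R A) *v (Bd *v d \<tau> + Bp *v p \<tau>) = u \<tau> + M \<tau> *v p \<tau>" for p \<tau>
    by (simp add: u_def M_def matrix_vector_right_distrib matrix_vector_mul_assoc)
  have Mc: "continuous_on {0..t} (\<lambda>\<tau>. M \<tau> $ i $ j)" for i j
  proof -
    have "continuous_on {0..t} (\<lambda>\<tau>. mat_exp ((t - \<tau>) *\<^sub>R A) $ i $ l)" for l
      by (rule continuous_on_compose2[OF mat_exp_continuous[of UNIV A i l]]) (auto intro!: continuous_intros)
    then have "continuous_on {0..t} (\<lambda>\<tau>. \<Sum>l\<in>UNIV. mat_exp ((t - \<tau>) *\<^sub>R A) $ i $ l * Bp $ l $ j)"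
      by (intro continuous_on_sum continuous_on_mult_right) auto
    moreover have "M \<tau> $ i $ j = (\<Sum>l\<in>UNIV. mat_exp ((t - \<tau>) *\<^sub>R A) $ i $ l * Bp $ l $ j)" for \<tau>
      by (simp add: M_def matrix_matrix_mult_def)
    ultimately show ?thesis by simp
  qed
  have Mnn: "0 \<le> M \<tau> $ i $ j" if "\<tau> \<in> {0..t}" for \<tau> i j
  proof -
    have "0 \<le> mat_exp ((t - \<tau>) *\<^sub>R A) $ i $ l" for l
      by (rule metzler_exp_nonneg[OF A_offdiag]) (use that in auto)
    then show ?thesis unfolding M_def matrix_matrix_mult_def
      using Bp_nonneg by (auto intro!: sum_nonneg)
  qed
  have Mbdd: "bounded ((\<lambda>\<tau>. M \<tau> $ i $ j) ` {0..t})" for i j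
    by (rule compact_imp_bounded[OF compact_continuous_image[OF Mc compact_Icc]])
  have al: "alpha_coef A Bp t $ i $ j = (SUP \<tau>\<in>{0..t}. M \<tau> $ i $ j)" for i j
    by (simp add: alpha_coef_def M_def)
  have be: "beta_coef A Bp t $ i $ j = (INF \<tau>\<in>{0..t}. M \<tau> $ i $ j)" for i j
    by (simp add: beta_coef_def M_def)
  have al_ge: "M \<tau> $ i $ j \<le> alpha_coef A Bp t $ i $ j" if "\<tau> \<in> {0..t}" for \<tau> i j
    unfolding al by (rule cSUP_upper[OF that bounded_imp_bdd_above[OF Mbdd]])
  have be_le: "beta_coef A Bp t $ i $ j \<le> M \<tau> $ i $ j" if "\<tau> \<in> {0..t}" for \<tau> i j
    unfolding be by (rule cINF_lower[OF bounded_imp_bdd_below[OF Mbdd] that])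
  have al0: "0 \<le> alpha_coef A Bp t $ i $ j" for i j
    using al_ge[of t i j] Mnn[of t i j] t0 by auto
  have be0: "0 \<le> beta_coef A Bp t $ i $ j" for i j
    unfolding be using t0 by (intro cINF_greatest) (auto intro: Mnn)
  have pint: "(\<lambda>\<tau>. p \<tau> $ j) integrable_on {0..t}"
    if "p integrable_on {0..tf}" for p :: "real \<Rightarrow> real^'m" and j
  proof -
    have "(\<lambda>\<tau>. p \<tau> $ j) integrable_on {0..tf}"
      using that integrable_on_iff_component by blast
    then show ?thesis by (rule integrable_on_subinterval) (use ttf in auto)
  qed
  have pnn: "0 \<le> p \<tau> $ j" if "\<forall>\<tau>\<in>{0..tf}. pmin \<le> p \<tau>" "\<tau> \<in> {0..t}" for p :: "real \<Rightarrow> real^'m" and \<tau> j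
  proof -
    have "pmin \<le> p \<tau>" using that ttf by auto
    then have "pmin $ j \<le> p \<tau> $ j" by (simp add: less_eq_vec_def)
    moreover have "0 \<le> pmin $ j" using pbounds(1) by (simp add: less_eq_vec_def)
    ultimately show ?thesis by linarith
  qed
  have Mpint: "(\<lambda>\<tau>. M \<tau> $ i $ j * p \<tau> $ j) integrable_on {0..t}"
    if "p integrable_on {0..tf}" "\<forall>\<tau>\<in>{0..tf}. pmin \<le> p \<tau>" for p :: "real \<Rightarrow> real^'m" and i j
    by (rule prod_integrable[OF Mc pint[OF that(1)]]) (rule pnn[OF that(2)])
  have Mvint: "(\<lambda>\<tau>. M \<tau> *v p \<tau>) integrable_on {0..t}"
    if "p integrable_on {0..tf}" "\<forall>\<tau>\<in>{0..tf}. pmin \<le> p \<tau>" for p :: "real \<Rightarrow> real^'m"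
  proof -
    have "(\<lambda>\<tau>. (M \<tau> *v p \<tau>) $ i) integrable_on {0..t}" for i
      unfolding matrix_vector_mult_def
      by (simp, rule integrable_sum) (auto intro: Mpint[OF that])
    then show ?thesis using integrable_on_iff_component by blast
  qed
  have Mv_comp: "integral {0..t} (\<lambda>\<tau>. M \<tau> *v p \<tau>) $ i = (\<Sum>j\<in>UNIV. integral {0..t} (\<lambda>\<tau>. M \<tau> $ i $ j * p \<tau> $ j))"
    if "p integrable_on {0..tf}" "\<forall>\<tau>\<in>{0..tf}. pmin \<le> p \<tau>" for p :: "real \<Rightarrow> real^'m" and i
  proof -
    have "integral {0..t} (\<lambda>\<tau>. M \<tau> *v p \<tau>) $ i = integral {0..t} (\<lambda>\<tau>. (M \<tau> *v p \<tau>) $ i)"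
      by (rule integral_component_eq_cart[symmetric, OF Mvint[OF that]])
    also have "\<dots> = integral {0..t} (\<lambda>\<tau>. \<Sum>j\<in>UNIV. M \<tau> $ i $ j * p \<tau> $ j)"
      by (simp add: matrix_vector_mult_def)
    also have "\<dots> = (\<Sum>j\<in>UNIV. integral {0..t} (\<lambda>\<tau>. M \<tau> $ i $ j * p \<tau> $ j))"
      by (rule integral_sum) (auto intro: Mpint[OF that])
    finally show ?thesis .
  qed
  have cint: "(\<lambda>\<tau>. c * pa \<tau> $ j) integrable_on {0..t}" for c j
    using integrable_on_cmult_left[OF pint[OF pa_int], of c j] by simp
  have pa_min: "\<forall>\<tau>\<in>{0..tf}. pmin \<le> pa \<tau>" using pa_bounds by auto
  have pp_min: "\<forall>\<tau>\<in>{0..tf}. pmin \<le> pplus \<tau>" using pplus_feas by (auto simp: feasible_power_def)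
  have pm_min: "\<forall>\<tau>\<in>{0..tf}. pmin \<le> pminus \<tau>" using pminus_feas by (auto simp: feasible_power_def)
  have opt: "box_feasible (alpha_coef A Bp t) (beta_coef A Bp t)
                   (b_coef A Bp pplus t) (b_coef A Bp pminus t) (Eup t) (Edown t)"
    using E_opt t by (auto simp: box_optimal_def)
  have bc: "b_coef A Bp p t = integral {0..t} (\<lambda>\<tau>. M \<tau> *v p \<tau>)" for p
    by (simp add: b_coef_def M_def)
  have upper: "integral {0..t} (\<lambda>\<tau>. M \<tau> *v pa \<tau>) \<le> b_coef A Bp pplus t"
  proof -
    have "integral {0..t} (\<lambda>\<tau>. M \<tau> *v pa \<tau>) $ i \<le> b_coef A Bp pplus t $ i" for i
    proof -
      have "integral {0..t} (\<lambda>\<tau>. M \<tau> *v pa \<tau>) $ i = (\<Sum>j\<in>UNIV. integral {0..t} (\<lambda>\<tau>. M \<tau> $ i $ j * pa \<tau> $ j))"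
        by (rule Mv_comp[OF pa_int pa_min])
      also have "\<dots> \<le> (\<Sum>j\<in>UNIV. alpha_coef A Bp t $ i $ j * Eup t $ j)"
      proof (rule sum_mono)
        fix j
        have "integral {0..t} (\<lambda>\<tau>. M \<tau> $ i $ j * pa \<tau> $ j) \<le> integral {0..t} (\<lambda>\<tau>. alpha_coef A Bp t $ i $ j * pa \<tau> $ j)"
          by (rule integral_le[OF Mpint[OF pa_int pa_min]])
             (use cint in \<open>auto intro!: mult_right_mono al_ge be_le pnn[OF pa_min]\<close>)
        also have "\<dots> = alpha_coef A Bp t $ i $ j * integral {0..t} (\<lambda>\<tau>. pa \<tau> $ j)"
          by (rule integral_mult_right)
        also have "\<dots> \<le> alpha_coef A Bp t $ i $ j * Eup t $ j"
          by (rule mult_left_mono[OF _ al0]) (use pa_energy t in auto)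
        finally show "integral {0..t} (\<lambda>\<tau>. M \<tau> $ i $ j * pa \<tau> $ j) \<le> alpha_coef A Bp t $ i $ j * Eup t $ j" .
      qed
      also have "\<dots> = (alpha_coef A Bp t *v Eup t) $ i" by (simp add: matrix_vector_mult_def)
      also have "\<dots> \<le> b_coef A Bp pplus t $ i"
        using opt by (simp add: box_feasible_def less_eq_vec_def)
      finally show ?thesis .
    qed
    then show ?thesis by (simp add: less_eq_vec_def)
  qed
  have lower: "b_coef A Bp pminus t \<le> integral {0..t} (\<lambda>\<tau>. M \<tau> *v pa \<tau>)"
  proof -
    have "b_coef A Bp pminus t $ i \<le> integral {0..t} (\<lambda>\<tau>. M \<tau> *v pa \<tau>) $ i" for i
    proof -
      have "b_coef A Bp pminus t $ i \<le> (beta_coef A Bp t *v Edown t) $ i"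
        using opt by (simp add: box_feasible_def less_eq_vec_def)
      also have "\<dots> = (\<Sum>j\<in>UNIV. beta_coef A Bp t $ i $ j * Edown t $ j)" by (simp add: matrix_vector_mult_def)
      also have "\<dots> \<le> (\<Sum>j\<in>UNIV. integral {0..t} (\<lambda>\<tau>. M \<tau> $ i $ j * pa \<tau> $ j))"
      proof (rule sum_mono)
        fix j
        have "beta_coef A Bp t $ i $ j * Edown t $ j \<le> beta_coef A Bp t $ i $ j * integral {0..t} (\<lambda>\<tau>. pa \<tau> $ j)"
          by (rule mult_left_mono[OF _ be0]) (use pa_energy t in auto)
        also have "\<dots> = integral {0..t} (\<lambda>\<tau>. beta_coef A Bp t $ i $ j * pa \<tau> $ j)"
          by (rule integral_mult_right[symmetric])
        also have "\<dots> \<le> integral {0..t} (\<lambda>\<tau>. M \<tau> $ i $ j * pa \<tau> $ j)"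
          by (rule integral_le[OF _ Mpint[OF pa_int pa_min]])
             (use cint in \<open>auto intro!: mult_right_mono al_ge be_le pnn[OF pa_min]\<close>)
        finally show "beta_coef A Bp t $ i $ j * Edown t $ j \<le> integral {0..t} (\<lambda>\<tau>. M \<tau> $ i $ j * pa \<tau> $ j)" .
      qed
      also have "\<dots> = integral {0..t} (\<lambda>\<tau>. M \<tau> *v pa \<tau>) $ i"
        by (rule Mv_comp[OF pa_int pa_min, symmetric])
      finally show ?thesis .
    qed
    then show ?thesis by (simp add: less_eq_vec_def)
  qed
  have st: "state A Bp Bd x0 d p t = mat_exp (t *\<^sub>R A) *v x0 + integral {0..t} (\<lambda>\<tau>. u \<tau> + M \<tau> *v p \<tau>)" for p
    by (simp add: state_def split)
  have xp: "xmin \<le> state A Bp Bd x0 d pplus t" "state A Bp Bd x0 d pplus t \<le> xmax"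
    using pplus_feas t by (auto simp: feasible_power_def)
  have xm: "xmin \<le> state A Bp Bd x0 d pminus t" "state A Bp Bd x0 d pminus t \<le> xmax"
    using pminus_feas t by (auto simp: feasible_power_def)
  show "xmin \<le> state A Bp Bd x0 d pa t \<and> state A Bp Bd x0 d pa t \<le> xmax"
  proof (cases "u integrable_on {0..t}")
    case True
    have st2: "state A Bp Bd x0 d p t = mat_exp (t *\<^sub>R A) *v x0 + integral {0..t} u + b_coef A Bp p t"
      if "p integrable_on {0..tf}" "\<forall>\<tau>\<in>{0..tf}. pmin \<le> p \<tau>" for p
      unfolding st bc by (simp add: integral_add[OF True Mvint[OF that]] add.assoc)
    have "state A Bp Bd x0 d pa t \<le> state A Bp Bd x0 d pplus t"
      unfolding st2[OF pa_int pa_min] st2[OF pplus_int pp_min] using upper bc[of pa] by simp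
    moreover have "state A Bp Bd x0 d pminus t \<le> state A Bp Bd x0 d pa t"
      unfolding st2[OF pa_int pa_min] st2[OF pminus_int pm_min] using lower bc[of pa] by simp
    ultimately show ?thesis using xp xm by (meson order_trans)
  next
    case False
    have z: "state A Bp Bd x0 d p t = mat_exp (t *\<^sub>R A) *v x0"
      if "p integrable_on {0..tf}" "\<forall>\<tau>\<in>{0..tf}. pmin \<le> p \<tau>" for p
    proof -
      have "\<not> (\<lambda>\<tau>. u \<tau> + M \<tau> *v p \<tau>) integrable_on {0..t}"
      proof
        assume "(\<lambda>\<tau>. u \<tau> + M \<tau> *v p \<tau>) integrable_on {0..t}"
        from integrable_diff[OF this Mvint[OF that]] have "u integrable_on {0..t}" by simp
        with False show False by simp
      qed
      then show ?thesis unfolding st by (simp add: not_integrable_integral)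
    qed
    show ?thesis using xp z[OF pa_int pa_min] z[OF pplus_int pp_min] by simp
  qed
qed

end
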